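(* For every finite $d\in\mathbb N$, the infimum of $\int_{\mathcal Q} v(q)\,dq$ over all $v\in\mathbb R[q]_d$ satisfying $v(q)-x\ge0$ for all $(q,x,y)\in\mathcal Z$ is attained.
   Context: Let $n\ge1$, $\mathcal Q=[-1,1]^n$, $dq$ Lebesgue measure, and $\mathbb R[q]_d$ the real polynomials in $q=(q_1,\dots,q_n)$ of degree at most $d$. Let $m\ge1$ and $p(q,s)=\sum_{k=0}^m p_k(q)s^k$ with $p_k\in\mathbb R[q]$, $p_m\equiv1$, $s\in\mathbb C$. Writing $s=x+iy$, define $p_\Re,p_\Im\in\mathbb R[q,x,y]$ by $p(q,x+iy)=p_\Re(q,x,y)+i\,p_\Im(q,x,y)$, and $\mathcal Z=\{(q,x,y): q\in\mathcal Q,\ p_\Re(q,x,y)=p_\Im(q,x,y)=0\}$. *)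

theory Defs
  imports "HOL-Analysis.Analysis"
begin

definition poly_fun_deg :: "nat \<Rightarrow> ((real^'n) \<Rightarrow> real) set" where
  "poly_fun_deg d = {v. \<exists>c :: ('n \<Rightarrow> nat) \<Rightarrow> real. \<forall>q.
      v q = (\<Sum>\<alpha>\<in>{\<alpha>. sum \<alpha> UNIV \<le> d}. c \<alpha> * (\<Prod>i\<in>UNIV. (q $ i) ^ (\<alpha> i)))}"

definition poly_fun :: "((real^'n) \<Rightarrow> real) set" where
  "poly_fun = (\<Union>d. poly_fun_deg d)"

definition Qbox :: "(real^'n) set" where
  "Qbox = {q. \<forall>i. \<bar>q $ i\<bar> \<le> 1}"

definition peval :: "(nat \<Rightarrow> real^'n \<Rightarrow> real) \<Rightarrow> nat \<Rightarrow> real^'n \<Rightarrow> complex \<Rightarrow> complex" where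
  "peval p m q s = (\<Sum>k\<le>m. complex_of_real (p k q) * s ^ k)"

definition pRe :: "(nat \<Rightarrow> real^'n \<Rightarrow> real) \<Rightarrow> nat \<Rightarrow> real^'n \<Rightarrow> real \<Rightarrow> real \<Rightarrow> real" where
  "pRe p m q x y = Re (peval p m q (Complex x y))"

definition pIm :: "(nat \<Rightarrow> real^'n \<Rightarrow> real) \<Rightarrow> nat \<Rightarrow> real^'n \<Rightarrow> real \<Rightarrow> real \<Rightarrow> real" where
  "pIm p m q x y = Im (peval p m q (Complex x y))"

definition Zset :: "(nat \<Rightarrow> real^'n \<Rightarrow> real) \<Rightarrow> nat \<Rightarrow> ((real^'n) \<times> real \<times> real) set" where
  "Zset p m = {(q, x, y). q \<in> Qbox \<and> pRe p m q x y = 0 \<and> pIm p m q x y = 0}"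

definition feasible :: "(nat \<Rightarrow> real^'n \<Rightarrow> real) \<Rightarrow> nat \<Rightarrow> nat \<Rightarrow> ((real^'n) \<Rightarrow> real) set" where
  "feasible p m d = {v \<in> poly_fun_deg d. \<forall>(q, x, y) \<in> Zset p m. v q - x \<ge> 0}"

end

theory Submission
  imports Defs "HOL-Complex_Analysis.Cauchy_Integral_Formula"
begin


lemma upd_vec_in_Qbox:
  assumes "q \<in> Qbox" "\<bar>t\<bar> \<le> 1"
  shows "(\<chi> i. if i = j then t else q $ i) \<in> Qbox"
  using assms by (auto simp: Qbox_def)

lemma ident_S:
  fixes c :: "('n::finite \<Rightarrow> nat) \<Rightarrow> real"
  assumes "finite S"
    and "\<forall>q\<in>(Qbox::(real^'n) set). (\<Sum>\<alpha>\<in>PiE S (\<lambda>_. {..d}). c \<alpha> * (\<Prod>i\<in>S. (q$i)^(\<alpha> i))) = 0"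
  shows "\<forall>\<alpha>\<in>PiE S (\<lambda>_. {..d}). c \<alpha> = 0"
  using assms
proof (induction S arbitrary: c rule: finite_induct)
  case empty
  have "(1::real^'n) \<in> Qbox" by (simp add: Qbox_def)
  with empty show ?case by auto
next
  case (insert j S)
  define G where "G = (\<lambda>k (q::real^'n). \<Sum>\<beta>\<in>PiE S (\<lambda>_. {..d}). c (\<beta>(j:=k)) * (\<Prod>i\<in>S. (q$i)^(\<beta> i)))"
  have expand: "(\<Sum>\<alpha>\<in>PiE (insert j S) (\<lambda>_. {..d}). c \<alpha> * (\<Prod>i\<in>insert j S. (q$i)^(\<alpha> i)))
      = (\<Sum>k\<le>d. G k q * (q$j)^k)" for q :: "real^'n"
  proof -
    have "(\<Sum>\<alpha>\<in>PiE (insert j S) (\<lambda>_. {..d}). c \<alpha> * (\<Prod>i\<in>insert j S. (q$i)^(\<alpha> i)))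
       = (\<Sum>x\<in>{..d} \<times> PiE S (\<lambda>_. {..d}). (\<lambda>\<alpha>. c \<alpha> * (\<Prod>i\<in>insert j S. (q$i)^(\<alpha> i))) ((\<lambda>(y, g). g(j := y)) x))"
      unfolding PiE_insert_eq
      by (rule sum.reindex[unfolded comp_def]) (rule inj_combinator[OF insert.hyps(2)])
    also have "\<dots> = (\<Sum>k\<le>d. \<Sum>\<beta>\<in>PiE S (\<lambda>_. {..d}). c (\<beta>(j:=k)) * (\<Prod>i\<in>insert j S. (q$i)^((\<beta>(j:=k)) i)))"
      by (simp add: sum.cartesian_product split_def)
    also have "\<dots> = (\<Sum>k\<le>d. \<Sum>\<beta>\<in>PiE S (\<lambda>_. {..d}). c (\<beta>(j:=k)) * ((q$j)^k * (\<Prod>i\<in>S. (q$i)^(\<beta> i))))"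
    proof (intro sum.cong refl)
      fix k \<beta>
      have "(\<Prod>i\<in>S. (q$i)^((\<beta>(j:=k)) i)) = (\<Prod>i\<in>S. (q$i)^(\<beta> i))"
        using insert.hyps(2) by (intro prod.cong) auto
      then show "c (\<beta>(j:=k)) * (\<Prod>i\<in>insert j S. (q$i)^((\<beta>(j:=k)) i)) = c (\<beta>(j:=k)) * ((q$j)^k * (\<Prod>i\<in>S. (q$i)^(\<beta> i)))"
        using insert.hyps by (simp add: prod.insert)
    qed
    also have "\<dots> = (\<Sum>k\<le>d. G k q * (q$j)^k)"
      unfolding G_def by (simp add: sum_distrib_left sum_distrib_right mult_ac)
    finally show ?thesis .
  qed
  have Gindep: "G k (\<chi> i. if i = j then t else q $ i) = G k q" for k t q
    unfolding G_def using insert.hyps(2) by (intro sum.cong refl arg_cong2[where f="(*)"] prod.cong) auto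
  have G0: "G k q = 0" if q: "q \<in> Qbox" and k: "k \<le> d" for q k
  proof (rule ccontr)
    assume "G k q \<noteq> 0"
    then have fin: "finite {t::real. (\<Sum>k\<le>d. G k q * t^k) = 0}"
      using k by (intro polyfun_rootbound_finite) auto
    have "{-1..1::real} \<subseteq> {t::real. (\<Sum>k\<le>d. G k q * t^k) = 0}"
    proof
      fix t :: real assume "t \<in> {-1..1}"
      then have "(\<chi> i. if i = j then t else q $ i) \<in> Qbox" using q by (intro upd_vec_in_Qbox) auto
      from insert.prems[rule_format, OF this] show "t \<in> {t::real. (\<Sum>k\<le>d. G k q * t^k) = 0}"
        unfolding expand by (simp add: Gindep)
    qed
    with fin have "finite {-1..1::real}" by (rule finite_subset[rotated])
    then show False using infinite_Icc[of "-1::real" 1] by simp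
  qed
  show ?case
  proof
    fix \<alpha> assume a: "\<alpha> \<in> PiE (insert j S) (\<lambda>_. {..d})"
    define \<beta> where "\<beta> = \<alpha>(j := undefined)"
    have b: "\<beta> \<in> PiE S (\<lambda>_. {..d})" using a insert.hyps(2) unfolding \<beta>_def by (auto simp: PiE_def extensional_def)
    have kd: "\<alpha> j \<le> d" using a by auto
    have "\<forall>\<beta>\<in>PiE S (\<lambda>_. {..d}). c (\<beta>(j:=\<alpha> j)) = 0"
      using insert.IH[of "\<lambda>\<beta>. c (\<beta>(j:=\<alpha> j))"] G0[OF _ kd] unfolding G_def by blast
    with b have "c (\<beta>(j:=\<alpha> j)) = 0" by blast
    moreover have "\<beta>(j:=\<alpha> j) = \<alpha>" unfolding \<beta>_def by simp
    ultimately show "c \<alpha> = 0" by simp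
  qed
qed



definition Aset :: "nat \<Rightarrow> ('n::finite \<Rightarrow> nat) set" where
  "Aset d = {\<alpha>. sum \<alpha> UNIV \<le> d}"
definition mon :: "('n::finite \<Rightarrow> nat) \<Rightarrow> real^'n \<Rightarrow> real" where
  "mon \<alpha> q = (\<Prod>i\<in>UNIV. (q$i)^(\<alpha> i))"
definition Lc :: "nat \<Rightarrow> (('n::finite \<Rightarrow> nat) \<Rightarrow> real) \<Rightarrow> real^'n \<Rightarrow> real" where
  "Lc d c q = (\<Sum>\<alpha>\<in>Aset d. c \<alpha> * mon \<alpha> q)"
definition Jc :: "nat \<Rightarrow> (('n::finite \<Rightarrow> nat) \<Rightarrow> real) \<Rightarrow> real" where
  "Jc d c = (\<Sum>\<alpha>\<in>Aset d. c \<alpha> * integral (Qbox::(real^'n) set) (mon \<alpha>))"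

lemma Aset_sub: "Aset d \<subseteq> PiE UNIV (\<lambda>_::'n::finite. {..d})"
proof
  fix \<alpha> :: "'n \<Rightarrow> nat" assume "\<alpha> \<in> Aset d"
  then have "\<alpha> i \<le> d" for i
    unfolding Aset_def using member_le_sum[of i UNIV \<alpha>] by auto
  then show "\<alpha> \<in> PiE UNIV (\<lambda>_. {..d})" by auto
qed

lemma finite_Aset: "finite (Aset d)"
  by (rule finite_subset[OF Aset_sub]) (simp add: finite_PiE)

lemma zero_Aset: "(\<lambda>_. 0) \<in> Aset d"
  by (simp add: Aset_def)

lemma Qbox_cbox: "(Qbox::(real^'n) set) = cbox (-1) 1"
  by (auto simp: Qbox_def mem_box_cart abs_le_iff)

lemma cont_mon: "continuous_on S (mon \<alpha>)"
  unfolding mon_def by (intro continuous_intros continuous_on_component continuous_on_id)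

lemma cont_Lc: "continuous_on S (Lc d c)"
  unfolding Lc_def by (intro continuous_intros cont_mon)

lemma integral_Lc: "integral Qbox (Lc d (c::('n::finite \<Rightarrow> nat) \<Rightarrow> real)) = Jc d c"
proof -
  have int: "mon \<alpha> integrable_on Qbox" for \<alpha> :: "'n \<Rightarrow> nat"
    unfolding Qbox_cbox by (rule integrable_continuous) (rule cont_mon)
  show ?thesis
    unfolding Lc_def Jc_def
    by (subst integral_sum) (auto simp: finite_Aset intro!: integrable_on_mult_right int)
qed

lemma mon_bound: "q \<in> Qbox \<Longrightarrow> \<bar>mon \<alpha> q\<bar> \<le> 1"
  unfolding mon_def abs_prod Qbox_def
  by (auto intro!: prod_le_1 simp: power_abs power_le_one)

lemma Lc_bound: "q \<in> Qbox \<Longrightarrow> \<bar>Lc d c q\<bar> \<le> (\<Sum>\<alpha>\<in>Aset d. \<bar>c \<alpha>\<bar>)"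
proof -
  assume q: "q \<in> Qbox"
  have "\<bar>Lc d c q\<bar> \<le> (\<Sum>\<alpha>\<in>Aset d. \<bar>c \<alpha> * mon \<alpha> q\<bar>)"
    unfolding Lc_def by (rule sum_abs)
  also have "\<dots> \<le> (\<Sum>\<alpha>\<in>Aset d. \<bar>c \<alpha>\<bar>)"
  proof (rule sum_mono)
    fix \<alpha> show "\<bar>c \<alpha> * mon \<alpha> q\<bar> \<le> \<bar>c \<alpha>\<bar>"
      using mon_bound[OF q, of \<alpha>] by (simp add: abs_mult mult_left_le)
  qed
  finally show ?thesis .
qed

lemma poly_fun_deg_eq: "poly_fun_deg d = {v. \<exists>c. v = Lc d c}"
  unfolding poly_fun_deg_def Lc_def Aset_def mon_def by (auto simp: fun_eq_iff)

lemma ident_A: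
  assumes "\<forall>q\<in>(Qbox::(real^'n::finite) set). Lc d c q = 0"
  shows "\<forall>\<alpha>\<in>Aset d. c \<alpha> = 0"
proof -
  define c' where "c' = (\<lambda>\<alpha>. if \<alpha> \<in> Aset d then c \<alpha> else 0)"
  have "(\<Sum>\<alpha>\<in>PiE UNIV (\<lambda>_. {..d}). c' \<alpha> * (\<Prod>i\<in>UNIV. (q$i)^(\<alpha> i))) = Lc d c q" for q :: "real^'n"
  proof -
    have "(\<Sum>\<alpha>\<in>PiE UNIV (\<lambda>_. {..d}). c' \<alpha> * (\<Prod>i\<in>UNIV. (q$i)^(\<alpha> i)))
        = (\<Sum>\<alpha>\<in>PiE UNIV (\<lambda>_. {..d}). if \<alpha> \<in> Aset d then c \<alpha> * mon \<alpha> q else 0)"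
      unfolding c'_def mon_def by (intro sum.cong) auto
    also have "\<dots> = (\<Sum>\<alpha>\<in>PiE UNIV (\<lambda>_. {..d}) \<inter> Aset d. c \<alpha> * mon \<alpha> q)"
      by (rule sum.inter_restrict[symmetric]) (simp add: finite_PiE)
    also have "PiE UNIV (\<lambda>_. {..d}) \<inter> Aset d = Aset d" using Aset_sub by blast
    finally show ?thesis unfolding Lc_def .
  qed
  then have "\<forall>\<alpha>\<in>PiE UNIV (\<lambda>_. {..d}). c' \<alpha> = 0"
    using assms by (intro ident_S) auto
  then show ?thesis using Aset_sub unfolding c'_def by force
qed



lemma peval_split:
  assumes "m \<ge> 1" "p m = (\<lambda>_. 1)"
  shows "peval p m q s = s^m + (\<Sum>k<m. complex_of_real (p k q) * s^k)"
  using assms unfolding peval_def by (simp add: lessThan_Suc_atMost[symmetric] add.commute)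

lemma root_bound:
  fixes s :: complex and a :: "nat \<Rightarrow> complex"
  assumes eq: "s^m + (\<Sum>k<m. a k * s^k) = 0" and bd: "\<forall>k<m. cmod (a k) \<le> M" and m: "m \<ge> 1"
  shows "cmod s \<le> max 1 (real m * M)"
proof (cases "cmod s \<le> 1")
  case True then show ?thesis by simp
next
  case False
  define r where "r = cmod s"
  have r1: "r > 1" using False r_def by simp
  have M0: "M \<ge> 0" using bd m by (meson dual_order.trans norm_ge_zero less_le_trans zero_less_one less_le_trans) 
  have "r^m = cmod (s^m)" by (simp add: r_def norm_power)
  also have "s^m = - (\<Sum>k<m. a k * s^k)" using eq by (simp add: eq_neg_iff_add_eq_0)
  also have "cmod (- (\<Sum>k<m. a k * s^k)) \<le> (\<Sum>k<m. cmod (a k * s^k))"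
    by (simp only: norm_minus_cancel) (rule norm_sum)
  also have "\<dots> \<le> (\<Sum>k<m. M * r^(m-1))"
  proof (rule sum_mono)
    fix k assume k: "k \<in> {..<m}"
    have "cmod (a k * s^k) = cmod (a k) * r^k" by (simp add: norm_mult norm_power r_def)
    also have "\<dots> \<le> M * r^(m-1)"
      using bd k r1 M0 by (intro mult_mono power_increasing) auto
    finally show "cmod (a k * s^k) \<le> M * r^(m-1)" .
  qed
  also have "\<dots> = real m * M * r^(m-1)" by simp
  finally have "r * r^(m-1) \<le> real m * M * r^(m-1)"
    using m by (metis Suc_diff_le diff_Suc_1 power_Suc)
  then have "r \<le> real m * M" using r1 by (simp add: mult_le_cancel_right)
  then show ?thesis by (simp add: r_def)
qed

lemma exists_root:
  assumes "m \<ge> 1" "p m = (\<lambda>_. 1)"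
  shows "\<exists>z. peval p m q z = 0"
proof -
  have "(\<lambda>i. complex_of_real (p i q)) 0 = 0 \<or> (\<exists>i\<in>{1..m}. (\<lambda>i. complex_of_real (p i q)) i \<noteq> 0)"
    using assms by (intro disjI2 bexI[of _ m]) auto
  then obtain z where "(\<Sum>i\<le>m. (\<lambda>i. complex_of_real (p i q)) i * z^i) = 0"
    by (rule fundamental_theorem_of_algebra)
  then show ?thesis unfolding peval_def by blast
qed

lemma poly_fun_bounded:
  assumes "f \<in> poly_fun"
  shows "\<exists>M. \<forall>q\<in>(Qbox::(real^'n::finite) set). \<bar>f q\<bar> \<le> M"
proof -
  from assms obtain d where "f \<in> poly_fun_deg d" unfolding poly_fun_def by auto
  then obtain c where "f = Lc d c" unfolding poly_fun_deg_eq by auto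
  then show ?thesis using Lc_bound by blast
qed

lemma common_bound:
  fixes p :: "nat \<Rightarrow> real^'n::finite \<Rightarrow> real"
  assumes "\<forall>k\<le>m. p k \<in> poly_fun"
  shows "\<exists>M. \<forall>k<m. \<forall>q\<in>(Qbox::(real^'n::finite) set). \<bar>p k q\<bar> \<le> M"
proof -
  have "\<forall>k. \<exists>M. k < m \<longrightarrow> (\<forall>q\<in>(Qbox::(real^'n::finite) set). \<bar>p k q\<bar> \<le> M)"
  proof (intro allI)
    fix k
    show "\<exists>M. k < m \<longrightarrow> (\<forall>q\<in>(Qbox::(real^'n::finite) set). \<bar>p k q\<bar> \<le> M)"
    proof (cases "k < m")
      case True
      then have "p k \<in> poly_fun" using assms by auto
      from poly_fun_bounded[OF this] show ?thesis by blast
    qed auto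
  qed
  then obtain f where f: "\<And>k. k < m \<Longrightarrow> \<forall>q\<in>(Qbox::(real^'n::finite) set). \<bar>p k q\<bar> \<le> f k"
    by metis
  have "\<forall>k<m. \<forall>q\<in>(Qbox::(real^'n::finite) set). \<bar>p k q\<bar> \<le> (\<Sum>j<m. \<bar>f j\<bar>)"
  proof (intro allI impI ballI)
    fix k q assume k: "k < m" and q: "q \<in> (Qbox::(real^'n::finite) set)"
    have "\<bar>p k q\<bar> \<le> \<bar>f k\<bar>" using f[OF k] q by force
    also have "\<dots> \<le> (\<Sum>j<m. \<bar>f j\<bar>)" using k by (intro member_le_sum) auto
    finally show "\<bar>p k q\<bar> \<le> (\<Sum>j<m. \<bar>f j\<bar>)" .
  qed
  then show ?thesis by blast
qed

lemma Z_props: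
  fixes p :: "nat \<Rightarrow> real^'n::finite \<Rightarrow> real"
  assumes m: "m \<ge> 1" and pm: "p m = (\<lambda>_. 1)" and pf: "\<forall>k\<le>m. p k \<in> poly_fun"
  shows "\<exists>R\<ge>0. (\<forall>(q,x,y)\<in>Zset p m. \<bar>x\<bar> \<le> R) \<and> (\<forall>q\<in>Qbox. \<exists>x y. (q,x,y) \<in> Zset p m)"
proof -
  obtain M where M: "\<forall>k<m. \<forall>q\<in>(Qbox::(real^'n) set). \<bar>p k q\<bar> \<le> M"
    using common_bound[OF pf] by blast
  define R where "R = max 1 (real m * M)"
  have "\<bar>x\<bar> \<le> R" if "(q,x,y) \<in> Zset p m" for q x y
  proof -
    have q: "q \<in> Qbox" and z: "peval p m q (Complex x y) = 0"
      using that unfolding Zset_def pRe_def pIm_def by (auto intro: complex_eqI)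
    have "cmod (Complex x y) \<le> R"
      unfolding R_def
      by (rule root_bound[where a="\<lambda>k. complex_of_real (p k q)"])
         (use z peval_split[of m p, OF m pm] M q m in auto)
    then show ?thesis using abs_Re_le_cmod[of "Complex x y"] by simp
  qed
  moreover have "\<exists>x y. (q,x,y) \<in> Zset p m" if "q \<in> Qbox" for q
  proof -
    obtain z where "peval p m q z = 0" using exists_root[of m p, OF m pm] by blast
    then have "(q, Re z, Im z) \<in> Zset p m"
      using that unfolding Zset_def pRe_def pIm_def by simp
    then show ?thesis by blast
  qed
  ultimately show ?thesis unfolding R_def by (intro exI[of _ R]) (auto simp: R_def)
qed



lemma cont_lin: "continuous_on S (\<lambda>c::('a \<Rightarrow> real). \<Sum>\<alpha>\<in>A. c \<alpha> * w \<alpha>)"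
  by (intro continuous_intros continuous_on_subset[OF continuous_on_product_coordinates]) auto

lemma closed_le_lin: "closed {c::('a \<Rightarrow> real). (\<Sum>\<alpha>\<in>A. c \<alpha> * w \<alpha>) \<le> t}"
  by (rule closed_Collect_le) (intro cont_lin continuous_intros)+

lemma closed_ge_lin: "closed {c::('a \<Rightarrow> real). t \<le> (\<Sum>\<alpha>\<in>A. c \<alpha> * w \<alpha>)}"
  by (rule closed_Collect_le) (intro cont_lin continuous_intros)+

definition Cube :: "nat \<Rightarrow> real \<Rightarrow> (('n::finite \<Rightarrow> nat) \<Rightarrow> real) set" where
  "Cube d B = PiE UNIV (\<lambda>\<alpha>. if \<alpha> \<in> Aset d then {-B..B} else {0})"

definition Sph :: "nat \<Rightarrow> (('n::finite \<Rightarrow> nat) \<Rightarrow> real) set" where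
  "Sph d = Cube d 1 \<inter> (\<Union>\<alpha>\<in>Aset d. {c. \<bar>c \<alpha>\<bar> = 1})"

lemma mem_Cube: "c \<in> Cube d B \<longleftrightarrow> (\<forall>\<alpha>. (\<alpha> \<in> Aset d \<longrightarrow> \<bar>c \<alpha>\<bar> \<le> B) \<and> (\<alpha> \<notin> Aset d \<longrightarrow> c \<alpha> = 0))"
  unfolding Cube_def by (auto simp: PiE_def Pi_def abs_le_iff split: if_splits)

lemma compact_Cube: "compact (Cube d B)"
proof -
  have "compactin (product_topology (\<lambda>_. euclidean) UNIV) (Cube d B)"
    unfolding Cube_def by (subst compactin_PiE) auto
  then show ?thesis by (simp add: euclidean_product_topology)
qed

lemma closed_abs_eq: "closed {c::('a \<Rightarrow> real). \<bar>c \<alpha>\<bar> = 1}"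
proof -
  have "closed {c::('a \<Rightarrow> real). (\<lambda>c. \<bar>c \<alpha>\<bar>) c = (\<lambda>c. 1) c}"
    by (rule closed_Collect_eq) (rule continuous_on_rabs[OF continuous_on_product_coordinates], rule continuous_on_const)
  then show ?thesis by simp
qed

lemma compact_Sph: "compact (Sph d :: (('n::finite \<Rightarrow> nat) \<Rightarrow> real) set)"
  unfolding Sph_def
  by (intro compact_Int_closed compact_Cube closed_UN finite_Aset ballI closed_abs_eq)



lemma Lc_lin: "Lc d c q = (\<Sum>\<alpha>\<in>Aset d. c \<alpha> * (\<lambda>\<alpha>. mon \<alpha> q) \<alpha>)"
  by (simp add: Lc_def)

lemma closed_Lc_ge: "closed {c. t \<le> Lc d c q}"
  unfolding Lc_def by (rule closed_ge_lin)

lemma closed_Jc_le: "closed {c. Jc d c \<le> t}"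
  unfolding Jc_def by (rule closed_le_lin)

lemma ge0_of_inv: 
  fixes a :: real
  assumes "\<And>k. - (1 / real (Suc k)) \<le> a" shows "0 \<le> a"
proof (rule ccontr)
  assume "\<not> 0 \<le> a"
  then obtain n where n: "n > 0" "inverse (real n) < -a" using ex_inverse_of_nat_less[of "-a"] by auto
  then have "Suc (n - 1) = n" by simp
  then show False using assms[of "n - 1"] n by (simp add: divide_inverse)
qed

lemma zero_on_Qbox:
  fixes c :: "('n::finite \<Rightarrow> nat) \<Rightarrow> real"
  assumes nn: "\<forall>q\<in>Qbox. 0 \<le> Lc d c q" and J: "Jc d c \<le> 0"
  shows "\<forall>q\<in>Qbox. Lc d c q = 0"
proof
  fix q :: "real^'n" assume q: "q \<in> Qbox"
  have int: "Lc d c integrable_on Qbox"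
    unfolding Qbox_cbox by (rule integrable_continuous) (rule cont_Lc)
  then have hi: "(Lc d c has_integral Jc d c) Qbox"
    using integral_Lc[of d c] by (metis has_integral_integral)
  have "0 \<le> Jc d c" by (rule has_integral_nonneg[OF hi]) (use nn in auto)
  with J have "Jc d c = 0" by simp
  with hi have hi0: "(Lc d c has_integral 0) (cbox (-1) 1)" by (simp add: Qbox_cbox)
  have ne: "box (-1) (1::real^'n) \<noteq> {}"
  proof -
    have "(0::real^'n) \<in> box (-1) 1" by (simp add: mem_box_cart)
    then show ?thesis by blast
  qed
  show "Lc d c q = 0"
    by (rule has_integral_0_cbox_imp_0[OF cont_Lc _ hi0 ne])
       (use nn q box_subset_cbox in \<open>auto simp: Qbox_cbox\<close>)
qed

lemma delta_exists:
  "\<exists>\<delta>>0. \<forall>c\<in>(Sph d :: (('n::finite \<Rightarrow> nat) \<Rightarrow> real) set).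
      (\<exists>q\<in>(Qbox::(real^'n) set). Lc d c q < -\<delta>) \<or> Jc d c > \<delta>"
proof (rule ccontr)
  assume "\<not> ?thesis"
  then have H: "\<forall>\<delta>>0. \<exists>c\<in>(Sph d :: (('n::finite \<Rightarrow> nat) \<Rightarrow> real) set).
      (\<forall>q\<in>(Qbox::(real^'n) set). -\<delta> \<le> Lc d c q) \<and> Jc d c \<le> \<delta>"
    by (metis not_less)
  define K where "K = (\<lambda>k::nat. (\<Inter>q\<in>(Qbox::(real^'n) set). {c::('n \<Rightarrow> nat) \<Rightarrow> real. - (1 / real (Suc k)) \<le> Lc d c q})
       \<inter> {c. Jc d c \<le> 1 / real (Suc k)})"
  have "Sph d \<inter> (\<Inter>k\<in>UNIV. K k) \<noteq> {}"
  proof (rule compact_imp_fip_image[OF compact_Sph])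
    fix k show "closed (K k)" unfolding K_def
      by (intro closed_Int closed_INT ballI closed_Lc_ge closed_Jc_le)
  next
    fix I' :: "nat set" assume fin: "finite I'"
    define k0 where "k0 = Max (insert 0 I')"
    have k0: "k \<le> k0" if "k \<in> I'" for k using fin that unfolding k0_def by simp
    obtain c where c: "c \<in> Sph d" and c1: "\<forall>q\<in>(Qbox::(real^'n) set). - (1 / real (Suc k0)) \<le> Lc d c q"
      and c2: "Jc d c \<le> 1 / real (Suc k0)"
      using H[rule_format, of "1 / real (Suc k0)"] by auto
    have "c \<in> K k" if "k \<in> I'" for k
    proof -
      have le: "1 / real (Suc k0) \<le> 1 / real (Suc k)" using k0[OF that] by (simp add: frac_le)
      show ?thesis unfolding K_def using c1 c2 le by force
    qed
    with c show "Sph d \<inter> (\<Inter>k\<in>I'. K k) \<noteq> {}" by blast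
  qed
  then obtain c where c: "c \<in> Sph d" and cK: "\<And>k. c \<in> K k" by blast
  have nn: "\<forall>q\<in>(Qbox::(real^'n) set). 0 \<le> Lc d c q"
  proof
    fix q :: "real^'n" assume "q \<in> Qbox"
    then show "0 \<le> Lc d c q" using cK unfolding K_def by (intro ge0_of_inv) blast
  qed
  have "0 \<le> - Jc d c" using cK unfolding K_def by (intro ge0_of_inv) auto
  then have J: "Jc d c \<le> 0" by simp
  have "\<forall>\<alpha>\<in>Aset d. c \<alpha> = 0" by (rule ident_A) (rule zero_on_Qbox[OF nn J])
  with c show False unfolding Sph_def by auto
qed



lemma coef_bound:
  fixes c :: "('n::finite \<Rightarrow> nat) \<Rightarrow> real"
  assumes \<delta>: "\<delta> > 0"
    and h\<delta>: "\<forall>c\<in>(Sph d :: (('n \<Rightarrow> nat) \<Rightarrow> real) set).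
      (\<exists>q\<in>(Qbox::(real^'n) set). Lc d c q < -\<delta>) \<or> Jc d c > \<delta>"
    and R: "R \<ge> 0"
    and supp: "\<forall>\<alpha>. \<alpha> \<notin> Aset d \<longrightarrow> c \<alpha> = 0"
    and low: "\<forall>q\<in>(Qbox::(real^'n) set). -R \<le> Lc d c q"
    and J: "Jc d c \<le> C"
  shows "c \<in> Cube d (max R \<bar>C\<bar> / \<delta>)"
proof -
  define B where "B = max R \<bar>C\<bar> / \<delta>"
  define Mx where "Mx = Max ((\<lambda>\<alpha>. \<bar>c \<alpha>\<bar>) ` Aset d)"
  have fin: "finite ((\<lambda>\<alpha>. \<bar>c \<alpha>\<bar>) ` Aset d)" by (rule finite_imageI[OF finite_Aset])
  have ne: "(\<lambda>\<alpha>. \<bar>c \<alpha>\<bar>) ` Aset d \<noteq> {}"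
  proof -
    have "(\<lambda>_::'n. 0::nat) \<in> Aset d" by (rule zero_Aset)
    then show ?thesis by blast
  qed
  have le: "\<bar>c \<alpha>\<bar> \<le> Mx" if "\<alpha> \<in> Aset d" for \<alpha>
    unfolding Mx_def by (rule Max_ge[OF fin]) (use that in blast)
  have "Mx \<in> (\<lambda>\<alpha>. \<bar>c \<alpha>\<bar>) ` Aset d" unfolding Mx_def by (rule Max_in[OF fin ne])
  then obtain \<alpha>0 where a0: "\<alpha>0 \<in> Aset d" "\<bar>c \<alpha>0\<bar> = Mx" by auto
  have "Mx \<le> B"
  proof (rule ccontr)
    assume "\<not> Mx \<le> B"
    then have MB: "B < Mx" by simp
    have B0: "0 \<le> B" unfolding B_def using \<delta> R by simp
    have Mx0: "0 < Mx" using MB B0 by simp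
    define c' where "c' = (\<lambda>\<alpha>. c \<alpha> / Mx)"
    have "c' \<in> Cube d 1"
      unfolding mem_Cube
    proof (intro allI conjI impI)
      fix \<alpha> :: "'n \<Rightarrow> nat" assume "\<alpha> \<in> Aset d"
      then show "\<bar>c' \<alpha>\<bar> \<le> 1" using le[of \<alpha>] Mx0 by (simp add: c'_def pos_divide_le_eq)
    next
      fix \<alpha> :: "'n \<Rightarrow> nat" assume "\<alpha> \<notin> Aset d"
      then show "c' \<alpha> = 0" using supp by (simp add: c'_def)
    qed
    moreover have "c' \<in> (\<Union>\<alpha>\<in>Aset d. {c. \<bar>c \<alpha>\<bar> = 1})"
    proof -
      have "\<bar>c' \<alpha>0\<bar> = 1" using a0 Mx0 by (simp add: c'_def pos_divide_le_eq)
      then show ?thesis using a0(1) by blast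
    qed
    ultimately have "c' \<in> Sph d" unfolding Sph_def by blast
    have Lc': "Lc d c' q = Lc d c q / Mx" for q unfolding Lc_def c'_def by (simp add: sum_divide_distrib)
    have Jc': "Jc d c' = Jc d c / Mx" unfolding Jc_def c'_def by (simp add: sum_divide_distrib)
    have "max R \<bar>C\<bar> < Mx * \<delta>" using MB \<delta> unfolding B_def by (simp add: pos_divide_less_eq)
    then have RM: "R < \<delta> * Mx" and CM: "\<bar>C\<bar> < \<delta> * Mx" by (simp_all add: mult.commute)
    from h\<delta>[rule_format, OF \<open>c' \<in> Sph d\<close>] show False
    proof
      assume "\<exists>q\<in>(Qbox::(real^'n) set). Lc d c' q < -\<delta>"
      then obtain q :: "real^'n" where q: "q \<in> Qbox" "Lc d c q / Mx < -\<delta>" by (auto simp: Lc')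
      then have "Lc d c q < -\<delta> * Mx" using Mx0 by (simp add: pos_divide_less_eq)
      moreover have "-R \<le> Lc d c q" using low q by auto
      ultimately show False using RM by linarith
    next
      assume "Jc d c' > \<delta>"
      then have "\<delta> * Mx < Jc d c" using Mx0 by (simp add: Jc' pos_less_divide_eq)
      with J CM show False using abs_ge_self[of C] by linarith
    qed
  qed
  show ?thesis unfolding mem_Cube B_def[symmetric]
  proof (intro allI conjI impI)
    fix \<alpha> :: "'n \<Rightarrow> nat" assume "\<alpha> \<in> Aset d"
    then show "\<bar>c \<alpha>\<bar> \<le> B" using le[of \<alpha>] \<open>Mx \<le> B\<close> by linarith
  next
    fix \<alpha> :: "'n \<Rightarrow> nat" assume "\<alpha> \<notin> Aset d"
    then show "c \<alpha> = 0" using supp by blast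
  qed
qed

theorem mainTheorem3:
  fixes p :: "nat \<Rightarrow> real^'n \<Rightarrow> real" and m d :: nat
  assumes "m \<ge> 1"
    and "p m = (\<lambda>_. 1)"
    and "\<forall>k\<le>m. p k \<in> poly_fun"
  shows "\<exists>v\<in>feasible p m d. \<forall>w\<in>feasible p m d.
           integral Qbox v \<le> integral Qbox w"
proof -
  obtain R where R0: "R \<ge> 0" and Rb: "\<forall>(q,x,y)\<in>Zset p m. \<bar>x\<bar> \<le> R"
    and ex: "\<forall>q\<in>Qbox. \<exists>x y. (q,x,y) \<in> Zset p m"
    using Z_props[OF assms] by blast
  obtain \<delta> where \<delta>: "\<delta> > 0" and h\<delta>: "\<forall>c\<in>(Sph d :: (('n \<Rightarrow> nat) \<Rightarrow> real) set).
      (\<exists>q\<in>(Qbox::(real^'n) set). Lc d c q < -\<delta>) \<or> Jc d c > \<delta>"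
    using delta_exists[of d] by blast
  define FC where "FC = {c::('n \<Rightarrow> nat) \<Rightarrow> real. \<forall>(q,x,y)\<in>Zset p m. x \<le> Lc d c q}"
  have "FC = (\<Inter>z\<in>Zset p m. {c. fst (snd z) \<le> Lc d c (fst z)})" unfolding FC_def by (auto simp: case_prod_unfold)
  then have FC_closed: "closed FC" by (simp add: closed_INT closed_Lc_ge)
  have low: "\<forall>q\<in>Qbox. -R \<le> Lc d c q" if "c \<in> FC" for c
  proof
    fix q :: "real^'n" assume "q \<in> Qbox"
    then obtain x y where z: "(q,x,y) \<in> Zset p m" using ex by blast
    then have "x \<le> Lc d c q" using that unfolding FC_def by blast
    moreover have "\<bar>x\<bar> \<le> R" using Rb z by blast
    ultimately show "-R \<le> Lc d c q" by linarith
  qed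
  have z0: "(\<lambda>_::'n. 0::nat) \<in> Aset d" by (rule zero_Aset)
  define c0 where "c0 = (\<lambda>\<alpha>::'n \<Rightarrow> nat. if \<alpha> = (\<lambda>_. 0) then R else 0)"
  have Lc0: "Lc d c0 q = R" for q
  proof -
    have "Lc d c0 q = (\<Sum>\<alpha>\<in>Aset d. if \<alpha> = (\<lambda>_. 0) then R * mon \<alpha> q else 0)"
      unfolding Lc_def by (intro sum.cong) (auto simp: c0_def)
    also have "\<dots> = R * mon (\<lambda>_. 0) q" using sum.delta[OF finite_Aset, of "\<lambda>_. 0" "\<lambda>\<alpha>. R * mon \<alpha> q" d] z0 by simp
    finally show ?thesis by (simp add: mon_def)
  qed
  have c0FC: "c0 \<in> FC" unfolding FC_def using Rb by (auto simp: Lc0)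
  have c0supp: "\<forall>\<alpha>. \<alpha> \<notin> Aset d \<longrightarrow> c0 \<alpha> = 0" using z0 by (auto simp: c0_def)
  define C where "C = Jc d c0"
  define B where "B = max R \<bar>C\<bar> / \<delta>"
  define S where "S = Cube d B \<inter> FC \<inter> {c. Jc d c \<le> C}"
  have inS: "c \<in> S" if "c \<in> FC" "\<forall>\<alpha>. \<alpha> \<notin> Aset d \<longrightarrow> c \<alpha> = 0" "Jc d c \<le> C" for c
    using coef_bound[OF \<delta> h\<delta> R0 that(2) low[OF that(1)] that(3)] that unfolding S_def B_def by blast
  have "compact S" unfolding S_def
    by (intro compact_Int_closed compact_Cube FC_closed closed_Jc_le)
  moreover have "S \<noteq> {}" using inS[OF c0FC c0supp] by (auto simp: C_def)
  moreover have "continuous_on S (Jc d)" unfolding Jc_def by (rule cont_lin)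
  ultimately obtain cs where cs: "cs \<in> S" and csmin: "\<forall>c\<in>S. Jc d cs \<le> Jc d c"
    using continuous_attains_inf by blast
  show ?thesis
  proof (intro bexI[of _ "Lc d cs"] ballI)
    have "Lc d cs \<in> poly_fun_deg d" unfolding poly_fun_deg_eq by blast
    moreover have "\<forall>(q,x,y)\<in>Zset p m. Lc d cs q - x \<ge> 0" using cs unfolding S_def FC_def by auto
    ultimately show "Lc d cs \<in> feasible p m d" unfolding feasible_def by blast
  next
    fix w assume w: "w \<in> feasible p m d"
    then obtain cw where wc: "w = Lc d cw" and wf: "\<forall>(q,x,y)\<in>Zset p m. w q - x \<ge> 0"
      unfolding feasible_def poly_fun_deg_eq by auto
    define cw' where "cw' = (\<lambda>\<alpha>. if \<alpha> \<in> Aset d then cw \<alpha> else 0)"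
    have L': "Lc d cw' = w" unfolding wc by (auto simp: Lc_def cw'_def intro!: sum.cong ext)
    have cwFC: "cw' \<in> FC" unfolding FC_def using wf by (auto simp: L')
    have cwsupp: "\<forall>\<alpha>. \<alpha> \<notin> Aset d \<longrightarrow> cw' \<alpha> = 0" by (simp add: cw'_def)
    have Iw: "integral Qbox w = Jc d cw'" using integral_Lc[of d cw'] by (simp add: L')
    have "Jc d cs \<le> Jc d cw'"
    proof (cases "Jc d cw' \<le> C")
      case True then show ?thesis using inS[OF cwFC cwsupp True] csmin by blast
    next
      case False then show ?thesis using cs unfolding S_def by auto
    qed
    then show "integral Qbox (Lc d cs) \<le> integral Qbox w" by (simp add: Iw integral_Lc)
  qed
qed


end
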